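(* Let $\alpha,\beta,\gamma,\delta,\epsilon,\zeta,\kappa,\lambda,\mu,b,c,f,m$ be parameters, and let $$A_0=\begin{pmatrix}\alpha&\beta&\gamma\\\delta&\epsilon&\zeta\\\kappa&\lambda&\mu\end{pmatrix},\qquad A_1=\begin{pmatrix}\alpha_1&\beta_1&\gamma_1\\\delta_1&\epsilon_1&\zeta_1\\\kappa_1&\lambda_1&\mu_1\end{pmatrix},$$ where $\alpha_1=2\alpha^2f-c\alpha\delta+\beta\delta b-b\alpha\epsilon$, $\beta_1=2f\alpha\beta+b\gamma\delta-c\alpha\epsilon-b\alpha\zeta$, $\gamma_1=2f\alpha\gamma-c\alpha\zeta$, $\delta_1=2m\alpha^2-2c\alpha\kappa+2b\beta\kappa-2b\alpha\lambda$, $\epsilon_1=2m\alpha\beta+2b\gamma\kappa-2c\alpha\lambda-2b\alpha\mu$, $\zeta_1=2m\alpha\gamma-2c\alpha\mu$, $\kappa_1=m\alpha\delta-2f\alpha\kappa+b\epsilon\kappa-b\delta\lambda$, $\lambda_1=m\alpha\epsilon+b\zeta\kappa-2f\alpha\lambda-b\delta\mu$, $\mu_1=m\alpha\zeta-2f\alpha\mu$. Put $\mathbf{X}=(x^2,x,1)^T$, $\mathbf{Y}=(y^2,y,1)^T$ and $I(x,y)=\dfrac{\mathbf{X}^TA_0\mathbf{Y}}{\mathbf{X}^TA_1\mathbf{Y}}$. Define $(g_1(x),g_2(x),g_3(x))^T=(A_0^T\mathbf{X})\times(A_1^T\mathbf{X})$ and the maps $$i_2:(x,y)\mapsto\left(x,\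 \frac{g_1(x)-g_2(x)y}{g_2(x)-g_3(x)y}\right),$$ $$h_1:(x,y)\mapsto\left(-\frac{(\delta y^2+\epsilon y+\zeta)x+2(\kappa y^2+\lambda y+\mu)}{2(\alpha y^2+\beta y+\gamma)x+\delta y^2+\epsilon y+\zeta},\ y\right),$$ $$h_2:(x,y)\mapsto\left(-\frac{(\delta_1 y^2+\epsilon_1 y+\zeta_1)x+2(\kappa_1 y^2+\lambda_1 y+\mu_1)}{2(\alpha_1 y^2+\beta_1 y+\gamma_1)x+\delta_1 y^2+\epsilon_1 y+\zeta_1},\ y\right).$$ Then $I\circ i_2=I$, $I\circ h_1=-I$ and $I\circ h_2=-I$.
   Context: $\times$ denotes the cross product of vectors in three-dimensional space; the entries of $(A_0^T\mathbf{X})\times(A_1^T\mathbf{X})$ are polynomials in $x$. *)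

theory Defs
  imports "HOL-Analysis.Analysis"
begin

definition A0 :: "real \<Rightarrow> real \<Rightarrow> real \<Rightarrow> real \<Rightarrow> real \<Rightarrow> real \<Rightarrow> real \<Rightarrow> real \<Rightarrow> real \<Rightarrow> real^3^3" where
  "A0 \<alpha> \<beta> \<gamma> \<delta> \<epsilon> \<zeta> \<kappa> lam \<mu> =
     vector [vector [\<alpha>, \<beta>, \<gamma>], vector [\<delta>, \<epsilon>, \<zeta>], vector [\<kappa>, lam, \<mu>]]"

definition A1 :: "real \<Rightarrow> real \<Rightarrow> real \<Rightarrow> real \<Rightarrow> real \<Rightarrow> real \<Rightarrow> real \<Rightarrow> real \<Rightarrow> real \<Rightarrow>
                  real \<Rightarrow> real \<Rightarrow> real \<Rightarrow> real \<Rightarrow> real^3^3" where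
  "A1 \<alpha> \<beta> \<gamma> \<delta> \<epsilon> \<zeta> \<kappa> lam \<mu> b c f m =
     vector [
       vector [2*\<alpha>^2*f - c*\<alpha>*\<delta> + \<beta>*\<delta>*b - b*\<alpha>*\<epsilon>,
               2*f*\<alpha>*\<beta> + b*\<gamma>*\<delta> - c*\<alpha>*\<epsilon> - b*\<alpha>*\<zeta>,
               2*f*\<alpha>*\<gamma> - c*\<alpha>*\<zeta>],
       vector [2*m*\<alpha>^2 - 2*c*\<alpha>*\<kappa> + 2*b*\<beta>*\<kappa> - 2*b*\<alpha>*lam,
               2*m*\<alpha>*\<beta> + 2*b*\<gamma>*\<kappa> - 2*c*\<alpha>*lam - 2*b*\<alpha>*\<mu>,
               2*m*\<alpha>*\<gamma> - 2*c*\<alpha>*\<mu>],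
       vector [m*\<alpha>*\<delta> - 2*f*\<alpha>*\<kappa> + b*\<epsilon>*\<kappa> - b*\<delta>*lam,
               m*\<alpha>*\<epsilon> + b*\<zeta>*\<kappa> - 2*f*\<alpha>*lam - b*\<delta>*\<mu>,
               m*\<alpha>*\<zeta> - 2*f*\<alpha>*\<mu>]]"

definition quadvec :: "real \<Rightarrow> real^3" where
  "quadvec t = vector [t^2, t, 1]"

definition bform :: "real^3^3 \<Rightarrow> real \<Rightarrow> real \<Rightarrow> real" where
  "bform A x y = quadvec x \<bullet> (A *v quadvec y)"

definition Ifun :: "real^3^3 \<Rightarrow> real^3^3 \<Rightarrow> real \<times> real \<Rightarrow> real" where
  "Ifun M0 M1 p = bform M0 (fst p) (snd p) / bform M1 (fst p) (snd p)"

definition gvec :: "real^3^3 \<Rightarrow> real^3^3 \<Rightarrow> real \<Rightarrow> real^3" where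
  "gvec M0 M1 x = cross3 (transpose M0 *v quadvec x) (transpose M1 *v quadvec x)"

definition i2 :: "real^3^3 \<Rightarrow> real^3^3 \<Rightarrow> real \<times> real \<Rightarrow> real \<times> real" where
  "i2 M0 M1 p = (let x = fst p; y = snd p; g = gvec M0 M1 x in
      (x, (g$1 - g$2 * y) / (g$2 - g$3 * y)))"

definition hden :: "real^3^3 \<Rightarrow> real \<times> real \<Rightarrow> real" where
  "hden A p = (let x = fst p; y = snd p in
      2 * (A$1$1 * y^2 + A$1$2 * y + A$1$3) * x + (A$2$1 * y^2 + A$2$2 * y + A$2$3))"

text \<open>The map h built from a matrix A; h1 = hmap A0, h2 = hmap A1.\<close>
definition hmap :: "real^3^3 \<Rightarrow> real \<times> real \<Rightarrow> real \<times> real" where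
  "hmap A p = (let x = fst p; y = snd p in
      (- ((A$2$1 * y^2 + A$2$2 * y + A$2$3) * x + 2 * (A$3$1 * y^2 + A$3$2 * y + A$3$3))
         / hden A p, y))"

end

theory Submission
  imports Defs
begin

lemma bform_x: "bform A x y = (A$1$1*y^2+A$1$2*y+A$1$3)*x^2 + (A$2$1*y^2+A$2$2*y+A$2$3)*x + (A$3$1*y^2+A$3$2*y+A$3$3)"
  unfolding bform_def quadvec_def inner_vec_def matrix_vector_mult_def
  by (simp add: sum_3 algebra_simps power2_eq_square)

lemma tv: "(transpose M *v quadvec x) $ j = M$1$j*x^2+M$2$j*x+M$3$j"
  by (simp add: matrix_vector_mult_def transpose_def sum_3 quadvec_def mult.commute)

lemma cr: "cross3 a b $ 1 = a$2*b$3 - a$3*b$2" "cross3 a b $ 2 = a$3*b$1 - a$1*b$3" "cross3 a b $ 3 = a$1*b$2 - a$2*b$1"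
  by (simp_all add: cross3_def vector_def)

lemma gvec_e: "gvec M0 M1 x $ 1 = (M0$1$2*x^2+M0$2$2*x+M0$3$2)*(M1$1$3*x^2+M1$2$3*x+M1$3$3) - (M0$1$3*x^2+M0$2$3*x+M0$3$3)*(M1$1$2*x^2+M1$2$2*x+M1$3$2)"
  "gvec M0 M1 x $ 2 = (M0$1$3*x^2+M0$2$3*x+M0$3$3)*(M1$1$1*x^2+M1$2$1*x+M1$3$1) - (M0$1$1*x^2+M0$2$1*x+M0$3$1)*(M1$1$3*x^2+M1$2$3*x+M1$3$3)"
  "gvec M0 M1 x $ 3 = (M0$1$1*x^2+M0$2$1*x+M0$3$1)*(M1$1$2*x^2+M1$2$2*x+M1$3$2) - (M0$1$2*x^2+M0$2$2*x+M0$3$2)*(M1$1$1*x^2+M1$2$1*x+M1$3$1)"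
  unfolding gvec_def cr tv by (rule refl)+

lemma bform_y: "bform A x y = (A$1$1*x^2+A$2$1*x+A$3$1)*y^2 + (A$1$2*x^2+A$2$2*x+A$3$2)*y + (A$1$3*x^2+A$2$3*x+A$3$3)"
  unfolding bform_def quadvec_def inner_vec_def matrix_vector_mult_def
  by (simp add: sum_3 algebra_simps power2_eq_square)

lemma e: fixes N D uu vv ww :: real assumes "D \<noteq> 0" shows "(uu*(N/D)^2+vv*(N/D)+ww) * D^2 = uu*N^2+vv*N*D+ww*D^2"
  using assms by (simp add: field_simps power2_eq_square)

lemma e2: fixes N D uu vv ww :: real assumes "D \<noteq> 0" shows "(uu*(-N/D)^2+vv*(-N/D)+ww) * D^2 = uu*N^2-vv*N*D+ww*D^2"
  using assms by (simp add: field_simps power2_eq_square)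

lemma comb: fixes X Y D2 P Q Av Bv :: real
  assumes "X*D2 = P" "Y*D2 = Q" "P*Bv = Q*Av" "D2 \<noteq> 0" shows "X*Bv = Y*Av"
proof -
  have "(X*Bv)*D2 = (X*D2)*Bv" by (simp add: mult_ac)
  also have "\<dots> = P*Bv" using assms(1) by simp
  also have "\<dots> = Q*Av" by (rule assms(3))
  also have "\<dots> = (Y*D2)*Av" using assms(2) by simp
  also have "\<dots> = (Y*Av)*D2" by (simp add: mult_ac)
  finally show ?thesis using assms(4) by simp
qed

lemma kid: fixes a0 a1 a2 b0 b1 b2 y :: real shows
 "(a0*((a1*b2-a2*b1) - (a2*b0-a0*b2)*y)^2+a1*((a1*b2-a2*b1) - (a2*b0-a0*b2)*y)*((a2*b0-a0*b2) - (a0*b1-a1*b0)*y)+a2*((a2*b0-a0*b2) - (a0*b1-a1*b0)*y)^2)*(b0*y^2+b1*y+b2) = (b0*((a1*b2-a2*b1) - (a2*b0-a0*b2)*y)^2+b1*((a1*b2-a2*b1) - (a2*b0-a0*b2)*y)*((a2*b0-a0*b2) - (a0*b1-a1*b0)*y)+b2*((a2*b0-a0*b2) - (a0*b1-a1*b0)*y)^2)*(a0*y^2+a1*y+a2)"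
  by (simp add: algebra_simps power2_eq_square)

lemma inv_y:
  fixes a0 a1 a2 b0 b1 b2 y y' :: real
  assumes D: "(a2*b0-a0*b2) - (a0*b1-a1*b0)*y \<noteq> 0"
  assumes y': "y' = ((a1*b2-a2*b1) - (a2*b0-a0*b2)*y) / ((a2*b0-a0*b2) - (a0*b1-a1*b0)*y)"
  assumes B: "b0*y^2+b1*y+b2 \<noteq> 0" "b0*y'^2+b1*y'+b2 \<noteq> 0"
  shows "(a0*y'^2+a1*y'+a2)/(b0*y'^2+b1*y'+b2) = (a0*y^2+a1*y+a2)/(b0*y^2+b1*y+b2)"
proof -
  define N where "N = (a1*b2-a2*b1) - (a2*b0-a0*b2)*y"
  define DD where "DD = (a2*b0-a0*b2) - (a0*b1-a1*b0)*y"
  have D': "DD \<noteq> 0" using D DD_def by simp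
  have yy: "y' = N/DD" using y' N_def DD_def by simp
  have k: "(a0*N^2+a1*N*DD+a2*DD^2)*(b0*y^2+b1*y+b2) = (b0*N^2+b1*N*DD+b2*DD^2)*(a0*y^2+a1*y+a2)"
    unfolding N_def DD_def by (rule kid)
  have "(a0*y'^2+a1*y'+a2)*(b0*y^2+b1*y+b2) = (b0*y'^2+b1*y'+b2)*(a0*y^2+a1*y+a2)"
    apply (rule comb[OF _ _ k])
    unfolding yy by (rule e[OF D'])+ (use D' in simp)
  thus ?thesis using B by (simp add: divide_simps)
qed

lemma ratio1: fixes d a bb :: real assumes "d \<noteq> 0" shows "(d*a)/((-d)*bb) = -(a/bb)"
  using assms by (cases "bb=0") (auto simp: field_simps)

lemma ratio2: fixes d a bb :: real assumes "d \<noteq> 0" shows "((-d)*a)/(d*bb) = -(a/bb)"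
  using assms by (cases "bb=0") (auto simp: field_simps)

lemma inv_h:
  fixes P0 Q0 R0 P1 Q1 R1 x x' :: real
  assumes ap: "2*P0*R1 + 2*P1*R0 - Q0*Q1 = 0"
  assumes D: "2*P0*x+Q0 \<noteq> 0"
  assumes x': "x' = - (Q0*x+2*R0)/(2*P0*x+Q0)"
  assumes B: "P1*x^2+Q1*x+R1 \<noteq> 0" "P1*x'^2+Q1*x'+R1 \<noteq> 0"
  shows "(P0*x'^2+Q0*x'+R0)/(P1*x'^2+Q1*x'+R1) = - ((P0*x^2+Q0*x+R0)/(P1*x^2+Q1*x+R1))"
proof -
  define N where "N = Q0*x+2*R0"
  define DD where "DD = 2*P0*x+Q0"
  have D': "DD \<noteq> 0" using D DD_def by simp
  have xx: "x' = -N/DD" using x' N_def DD_def by simp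
  have a0: "P0*N^2-Q0*N*DD+R0*DD^2 = (4*P0*R0-Q0^2)*(P0*x^2+Q0*x+R0)"
    unfolding N_def DD_def by (simp add: algebra_simps power2_eq_square)
  have Q: "P1*N^2-Q1*N*DD+R1*DD^2 = -(4*P0*R0-Q0^2)*(P1*x^2+Q1*x+R1)
     + (2*P0*x^2+2*Q0*x+2*R0) * (2*P0*R1 + 2*P1*R0 - Q0*Q1)"
    unfolding N_def DD_def by (simp add: algebra_simps power2_eq_square)
  have a: "(P0*x'^2+Q0*x'+R0) * DD^2 = (4*P0*R0-Q0^2)*(P0*x^2+Q0*x+R0)"
    using e2[OF D', of P0 N Q0 R0] a0 xx by simp
  have b: "(P1*x'^2+Q1*x'+R1) * DD^2 = -(4*P0*R0-Q0^2)*(P1*x^2+Q1*x+R1)"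
    using e2[OF D', of P1 N Q1 R1] Q ap xx by simp
  have dn: "4*P0*R0-Q0^2 \<noteq> 0" using b B D' by auto
  have "(P0*x'^2+Q0*x'+R0)/(P1*x'^2+Q1*x'+R1) = ((P0*x'^2+Q0*x'+R0) * DD^2)/((P1*x'^2+Q1*x'+R1) * DD^2)"
    using D' by simp
  also have "\<dots> = - ((P0*x^2+Q0*x+R0)/(P1*x^2+Q1*x+R1))" unfolding a b by (rule ratio1[OF dn])
  finally show ?thesis .
qed

lemma inv_h2:
  fixes P0 Q0 R0 P1 Q1 R1 x x' :: real
  assumes ap: "2*P0*R1 + 2*P1*R0 - Q0*Q1 = 0"
  assumes D: "2*P0*x+Q0 \<noteq> 0"
  assumes x': "x' = - (Q0*x+2*R0)/(2*P0*x+Q0)"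
  assumes B: "P0*x^2+Q0*x+R0 \<noteq> 0" "P0*x'^2+Q0*x'+R0 \<noteq> 0"
  shows "(P1*x'^2+Q1*x'+R1)/(P0*x'^2+Q0*x'+R0) = - ((P1*x^2+Q1*x+R1)/(P0*x^2+Q0*x+R0))"
proof -
  define N where "N = Q0*x+2*R0"
  define DD where "DD = 2*P0*x+Q0"
  have D': "DD \<noteq> 0" using D DD_def by simp
  have xx: "x' = -N/DD" using x' N_def DD_def by simp
  have a0: "P0*N^2-Q0*N*DD+R0*DD^2 = (4*P0*R0-Q0^2)*(P0*x^2+Q0*x+R0)"
    unfolding N_def DD_def by (simp add: algebra_simps power2_eq_square)
  have Q: "P1*N^2-Q1*N*DD+R1*DD^2 = -(4*P0*R0-Q0^2)*(P1*x^2+Q1*x+R1)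
     + (2*P0*x^2+2*Q0*x+2*R0) * (2*P0*R1 + 2*P1*R0 - Q0*Q1)"
    unfolding N_def DD_def by (simp add: algebra_simps power2_eq_square)
  have a: "(P0*x'^2+Q0*x'+R0) * DD^2 = (4*P0*R0-Q0^2)*(P0*x^2+Q0*x+R0)"
    using e2[OF D', of P0 N Q0 R0] a0 xx by simp
  have b: "(P1*x'^2+Q1*x'+R1) * DD^2 = -(4*P0*R0-Q0^2)*(P1*x^2+Q1*x+R1)"
    using e2[OF D', of P1 N Q1 R1] Q ap xx by simp
  have dn: "4*P0*R0-Q0^2 \<noteq> 0" using a B D' by auto
  have "(P1*x'^2+Q1*x'+R1)/(P0*x'^2+Q0*x'+R0) = ((P1*x'^2+Q1*x'+R1) * DD^2)/((P0*x'^2+Q0*x'+R0) * DD^2)"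
    using D' by simp
  also have "\<dots> = - ((P1*x^2+Q1*x+R1)/(P0*x^2+Q0*x+R0))" unfolding a b by (rule ratio2[OF dn])
  finally show ?thesis .
qed

lemma apolar:
  fixes \<alpha> \<beta> \<gamma> \<delta> \<epsilon> \<zeta> \<kappa> lam \<mu> b c f m y :: real
  defines "M0 \<equiv> A0 \<alpha> \<beta> \<gamma> \<delta> \<epsilon> \<zeta> \<kappa> lam \<mu>"
      and "M1 \<equiv> A1 \<alpha> \<beta> \<gamma> \<delta> \<epsilon> \<zeta> \<kappa> lam \<mu> b c f m"
  shows "2*(M0$1$1*y^2+M0$1$2*y+M0$1$3)*(M1$3$1*y^2+M1$3$2*y+M1$3$3)
       + 2*(M1$1$1*y^2+M1$1$2*y+M1$1$3)*(M0$3$1*y^2+M0$3$2*y+M0$3$3)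
       - (M0$2$1*y^2+M0$2$2*y+M0$2$3)*(M1$2$1*y^2+M1$2$2*y+M1$2$3) = 0"
  unfolding M0_def M1_def A0_def A1_def
  by (simp add: algebra_simps power2_eq_square)

lemma swap_ap: fixes a b c d e g :: real shows "2*a*b + 2*c*d - e*g = 0 \<Longrightarrow> 2*c*d + 2*a*b - g*e = 0"
  by (simp add: algebra_simps)


lemma hmap_lemma1:
  fixes A B :: "real^3^3" and x y :: real
  assumes ap: "2*(A$1$1*y^2+A$1$2*y+A$1$3)*(B$3$1*y^2+B$3$2*y+B$3$3)
       + 2*(B$1$1*y^2+B$1$2*y+B$1$3)*(A$3$1*y^2+A$3$2*y+A$3$3)
       - (A$2$1*y^2+A$2$2*y+A$2$3)*(B$2$1*y^2+B$2$2*y+B$2$3) = 0"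
  assumes h: "bform B (fst (x,y)) (snd (x,y)) \<noteq> 0 \<and> hden A (x,y) \<noteq> 0
              \<and> bform B (fst (hmap A (x,y))) (snd (hmap A (x,y))) \<noteq> 0"
  shows "Ifun A B (hmap A (x,y)) = - Ifun A B (x,y)"
proof -
  define P0 where "P0 = A$1$1*y^2+A$1$2*y+A$1$3"
  define Q0 where "Q0 = A$2$1*y^2+A$2$2*y+A$2$3"
  define R0 where "R0 = A$3$1*y^2+A$3$2*y+A$3$3"
  define P1 where "P1 = B$1$1*y^2+B$1$2*y+B$1$3"
  define Q1 where "Q1 = B$2$1*y^2+B$2$2*y+B$2$3"
  define R1 where "R1 = B$3$1*y^2+B$3$2*y+B$3$3"
  define x' where "x' = - (Q0*x+2*R0)/(2*P0*x+Q0)"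
  have ap': "2*P0*R1 + 2*P1*R0 - Q0*Q1 = 0" using ap unfolding P0_def Q0_def R0_def P1_def Q1_def R1_def .
  have hm: "hmap A (x,y) = (x', y)" unfolding hmap_def hden_def x'_def P0_def Q0_def R0_def Let_def fst_conv snd_conv ..
  have bA: "\<And>z. bform A z y = P0*z^2+Q0*z+R0" unfolding bform_x P0_def Q0_def R0_def ..
  have bB: "\<And>z. bform B z y = P1*z^2+Q1*z+R1" unfolding bform_x P1_def Q1_def R1_def ..
  have D: "2*P0*x+Q0 \<noteq> 0" using h unfolding hden_def Let_def fst_conv snd_conv P0_def Q0_def by blast
  have h1: "bform B x y \<noteq> 0" "bform B x' y \<noteq> 0" using h hm by auto
  have B1: "P1*x^2+Q1*x+R1 \<noteq> 0" and B2: "P1*x'^2+Q1*x'+R1 \<noteq> 0" using h1 bB by auto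
  show ?thesis
    unfolding hm Ifun_def fst_conv snd_conv bA bB by (rule inv_h[OF ap' D x'_def B1 B2])
qed

lemma hmap_lemma2:
  fixes A B :: "real^3^3" and x y :: real
  assumes ap: "2*(A$1$1*y^2+A$1$2*y+A$1$3)*(B$3$1*y^2+B$3$2*y+B$3$3)
       + 2*(B$1$1*y^2+B$1$2*y+B$1$3)*(A$3$1*y^2+A$3$2*y+A$3$3)
       - (A$2$1*y^2+A$2$2*y+A$2$3)*(B$2$1*y^2+B$2$2*y+B$2$3) = 0"
  assumes h: "bform A (fst (x,y)) (snd (x,y)) \<noteq> 0 \<and> hden A (x,y) \<noteq> 0
              \<and> bform A (fst (hmap A (x,y))) (snd (hmap A (x,y))) \<noteq> 0"
  shows "Ifun B A (hmap A (x,y)) = - Ifun B A (x,y)"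
proof -
  define P0 where "P0 = A$1$1*y^2+A$1$2*y+A$1$3"
  define Q0 where "Q0 = A$2$1*y^2+A$2$2*y+A$2$3"
  define R0 where "R0 = A$3$1*y^2+A$3$2*y+A$3$3"
  define P1 where "P1 = B$1$1*y^2+B$1$2*y+B$1$3"
  define Q1 where "Q1 = B$2$1*y^2+B$2$2*y+B$2$3"
  define R1 where "R1 = B$3$1*y^2+B$3$2*y+B$3$3"
  define x' where "x' = - (Q0*x+2*R0)/(2*P0*x+Q0)"
  have ap': "2*P0*R1 + 2*P1*R0 - Q0*Q1 = 0" using ap unfolding P0_def Q0_def R0_def P1_def Q1_def R1_def .
  have hm: "hmap A (x,y) = (x', y)" unfolding hmap_def hden_def x'_def P0_def Q0_def R0_def Let_def fst_conv snd_conv ..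
  have bA: "\<And>z. bform A z y = P0*z^2+Q0*z+R0" unfolding bform_x P0_def Q0_def R0_def ..
  have bB: "\<And>z. bform B z y = P1*z^2+Q1*z+R1" unfolding bform_x P1_def Q1_def R1_def ..
  have D: "2*P0*x+Q0 \<noteq> 0" using h unfolding hden_def Let_def fst_conv snd_conv P0_def Q0_def by blast
  have h1: "bform A x y \<noteq> 0" "bform A x' y \<noteq> 0" using h hm by auto
  have B1: "P0*x^2+Q0*x+R0 \<noteq> 0" and B2: "P0*x'^2+Q0*x'+R0 \<noteq> 0" using h1 bA by auto
  show ?thesis
    unfolding hm Ifun_def fst_conv snd_conv bA bB by (rule inv_h2[OF ap' D x'_def B1 B2])
qed

theorem proposition2:
  fixes \<alpha> \<beta> \<gamma> \<delta> \<epsilon> \<zeta> \<kappa> lam \<mu> b c f m :: real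
  defines "M0 \<equiv> A0 \<alpha> \<beta> \<gamma> \<delta> \<epsilon> \<zeta> \<kappa> lam \<mu>"
      and "M1 \<equiv> A1 \<alpha> \<beta> \<gamma> \<delta> \<epsilon> \<zeta> \<kappa> lam \<mu> b c f m"
  shows "(\<forall>p. bform M1 (fst p) (snd p) \<noteq> 0
              \<and> (gvec M0 M1 (fst p))$2 - (gvec M0 M1 (fst p))$3 * snd p \<noteq> 0
              \<and> bform M1 (fst (i2 M0 M1 p)) (snd (i2 M0 M1 p)) \<noteq> 0
           \<longrightarrow> Ifun M0 M1 (i2 M0 M1 p) = Ifun M0 M1 p)
       \<and> (\<forall>p. bform M1 (fst p) (snd p) \<noteq> 0 \<and> hden M0 p \<noteq> 0
              \<and> bform M1 (fst (hmap M0 p)) (snd (hmap M0 p)) \<noteq> 0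
           \<longrightarrow> Ifun M0 M1 (hmap M0 p) = - Ifun M0 M1 p)
       \<and> (\<forall>p. bform M1 (fst p) (snd p) \<noteq> 0 \<and> hden M1 p \<noteq> 0
              \<and> bform M1 (fst (hmap M1 p)) (snd (hmap M1 p)) \<noteq> 0
           \<longrightarrow> Ifun M0 M1 (hmap M1 p) = - Ifun M0 M1 p)"

proof (intro conjI allI impI)
  fix p :: "real \<times> real"
  obtain x y where p: "p = (x,y)" by fastforce
  have ap: "2*(M0$1$1*y^2+M0$1$2*y+M0$1$3)*(M1$3$1*y^2+M1$3$2*y+M1$3$3)
       + 2*(M1$1$1*y^2+M1$1$2*y+M1$1$3)*(M0$3$1*y^2+M0$3$2*y+M0$3$3)
       - (M0$2$1*y^2+M0$2$2*y+M0$2$3)*(M1$2$1*y^2+M1$2$2*y+M1$2$3) = 0"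
    unfolding M0_def M1_def by (rule apolar)
  {
    assume h: "bform M1 (fst p) (snd p) \<noteq> 0
              \<and> (gvec M0 M1 (fst p))$2 - (gvec M0 M1 (fst p))$3 * snd p \<noteq> 0
              \<and> bform M1 (fst (i2 M0 M1 p)) (snd (i2 M0 M1 p)) \<noteq> 0"
    note hu = h[unfolded p Ifun_def i2_def Let_def fst_conv snd_conv bform_y gvec_e]
    show "Ifun M0 M1 (i2 M0 M1 p) = Ifun M0 M1 p"
      unfolding p Ifun_def i2_def Let_def fst_conv snd_conv bform_y gvec_e
      by (rule inv_y[OF conjunct1[OF conjunct2[OF hu]] refl conjunct1[OF hu] conjunct2[OF conjunct2[OF hu]]])
  }
  {
    assume h: "bform M1 (fst p) (snd p) \<noteq> 0 \<and> hden M0 p \<noteq> 0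
              \<and> bform M1 (fst (hmap M0 p)) (snd (hmap M0 p)) \<noteq> 0"
    show "Ifun M0 M1 (hmap M0 p) = - Ifun M0 M1 p"
      using h unfolding p by (rule hmap_lemma1[OF ap])
  }
  {
    assume h: "bform M1 (fst p) (snd p) \<noteq> 0 \<and> hden M1 p \<noteq> 0
              \<and> bform M1 (fst (hmap M1 p)) (snd (hmap M1 p)) \<noteq> 0"
    show "Ifun M0 M1 (hmap M1 p) = - Ifun M0 M1 p"
      using h unfolding p by (rule hmap_lemma2[OF swap_ap[OF ap]])
  }
qed

end
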